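(* Let $\mathcal{R}$ be a left-linear conditional term rewriting system, $\mathcal{A}$ a lattice tree automaton and $E$ a set of linear (approximation) equations. If the completion of $\mathcal{A}$ by $\mathcal{R}$ and $E$ terminates on an automaton $\mathcal{A}^*_{\mathcal{R},E}$, then $\mathcal{L}(\mathcal{A}^*_{\mathcal{R},E})\supseteq\mathcal{R}^*(\mathcal{L}(\mathcal{A}))$.
   Context: Domains and terms. A concrete domain $\mathcal{D}$ with interpreted symbols $\mathcal{F}_\bullet=\mathcal{D}\cup OP$ (elements of $\mathcal{D}$ as constants, operations $OP$ on $\mathcal{D}$) and passive (uninterpreted) symbols $\mathcal{F}_\circ$; $eval$ simplifies terms over $\mathcal{F}_\bullet$ to elements of $\mathcal{D}$ and extends homomorphically to other terms. The concrete domain is abstracted (Galois connection, abstraction $\alpha$) by an atomic lattice $\Lambda$, whose atoms correspond to concrete values; abstract interpreted symbols are $\mathcal{F}_\bullet^{\#}=\Lambda\cup OP^{\#}\cup\{\sqcup,\sqcap\}$ with abstract evaluation into $\Lambda$. Lattice tree automaton (LTA) $\langle\mathcal{F},\mathcal{Q},\mathcal{Q}_f,\Delta\rangle$, $\mathcal{F}=\mathcal{F}_\circ\cup\mathcal{F}_\bullet^{\#}$: finite states, final states, normalized transitions $f(q_1,\dots,q_n)\to q$ including lambda transitions $\lambda\to q$ ($\lambda\in\Lambda$). Runs: a subterm over interpreted symbols whose evaluation is $\sqsubseteq\lambda$ reduces to $q$ if $\lambda\to q\in\Delta$; $f(q_1..q_n)\to q$ rewrites as usual. The term order $\sqsubseteq$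 compares interpreted subterms by evaluation and passive symbols structurally. $\mathcal{L}(\mathcal{A},q)$: ground terms $t$ (passive symbols, operations, atoms of $\Lambda$) such that some $t'\sqsupseteq t$ satisfies $t'\to^*_{\mathcal{A}}q$; $\mathcal{L}(\mathcal{A})$ the union over final states. Conditional TRS. Rules $l\to r\Leftarrow c_1\wedge\dots\wedge c_n$ with $l$ a non-variable term over passive symbols and variables, $r$ a term over $\mathcal{F}_\circ\cup\mathcal{F}_\bullet$ and variables, $\mathit{Var}(r)\subseteq\mathit{Var}(l)$, each $c_i=\rho_i(t_1,\dots,t_m)$ with $\rho_i$ a predicate on $\mathcal{D}^m$ and $t_j$ terms over interpreted symbols and variables of $l$; a predicate evaluates its arguments with $eval$ and is false if some argument is not a term over interpreted symbols. Left-linear: each variable occurs at most once in $l$. Rewriting: $s\to_{\mathcal{R}}t$ iff there are a rule, a position $p$ and a ground substitution $\sigma$ with $s|_p=l\sigma$, all $c_i\sigma$ true, and $t=eval(s[r\sigma]_p)$. $\mathcal{R}^*(L)$ is the set of terms reachable from $L$ by $\to^*_{\mathcal{R}}$. Completion. For a rule $rl=l\to r\Leftarrow c$ and state $q$: $Matching(l,\mathcal{A},q)$ returns the substitutions $\sigma$ from variables to states with $l\sigma\to^*_{\mathcal{A}}q$; a solver $Solve(\sigma,\mathcal{A},c)$ restricts the constrained variables to lattice elements, over-approximating the solutions of $c$; $\Omega(\mathcal{A},rl,q)=\{\sigma'\mid\sigma\in Matching(l,\mathcal{A},q),\ \sigma'\in Solve(\sigma,\mathcal{A},c),\ \nexists\sigma'':\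 r\sigma'\sqsubseteq r\sigma''\to^*_{\mathcal{A}}q\}$. $Norm(s\to^*q)$ turns $s\to q$ into normalized transitions (concrete constants $d$ become $\alpha(d)\to q$, subterms get existing states recognizing them or new states). The one-step completed automaton ${\cal C}_{\mathcal{R}}(\mathcal{A})$ adds, for every rule, state $q$ and $\sigma\in\Omega(\mathcal{A},rl,q)$, the transitions $Norm(r\sigma\to^* q')\cup\{q'\to q\}$ with $q'$ a new state. $\leadsto^!_E$ merges (replacing one state by the other everywhere) any states $q,q'$ such that for some equation $u=v\Leftarrow c$ of $E$ and substitution $\sigma$, $u\sigma\to^*q$, $v\sigma\to^*q'$ and $c$ is satisfiable. $eval(\mathcal{A})$ closes the transition set under the rule: if $f(q_1..q_k)\to q$ with $f$ an interpreted operation and $\lambda_i\to^* q_i$, add $eval(f(\lambda_1..\lambda_k))\to q$ unless some $\lambda\to q$ already covers it (a widening operator on $\Lambda$ may be used to make this terminate, which only enlarges lattice elements). The completion sequence is $\mathcal{A}^0_{\mathcal{R},E}=\mathcal{A}$, and $\mathcal{A}^{n+1}_{\mathcal{R},E}=eval(\mathcal{A}'')$ where ${\cal C}_{\mathcal{R}}(eval(\mathcal{A}^n_{\mathcal{R},E}))\leadsto^!_E\mathcal{A}''$; completion terminates if $\mathcal{A}^{k+1}_{\mathcal{R},E}=\mathcal{A}^k_{\mathcal{R},E}$ for some $k$, and then $\mathcal{A}^*_{\mathcal{R},E}=\mathcal{A}^k_{\mathcal{R},E}$. *)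

theory Defs
  imports Main
begin

section \<open>Terms\<close>

text \<open>One term datatype serves for concrete terms (constants 'c = concrete values 'd,
  operation symbols 'o, variables 'v) and for abstract configurations
  (constants 'c = lattice elements 'l, operation symbols 'o absop = OP# plus join/meet,
  leaves V q = automaton states).  Fn = passive_trm (uninterpreted) symbols,
  Op = interpreted operations, Cn = interpreted constants.\<close>

datatype ('f,'o,'c,'v) trm =
    V 'v
  | Fn 'f "('f,'o,'c,'v) trm list"
  | Op 'o "('f,'o,'c,'v) trm list"
  | Cn 'c

datatype 'o absop = AOp 'o | AJoin | AMeet

fun vars :: "('f,'o,'c,'v) trm \<Rightarrow> 'v set" where
  "vars (V x) = {x}"
| "vars (Fn f ts) = (\<Union>t\<in>set ts. vars t)"
| "vars (Op g ts) = (\<Union>t\<in>set ts. vars t)"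
| "vars (Cn c) = {}"

definition ground :: "('f,'o,'c,'v) trm \<Rightarrow> bool" where
  "ground t \<longleftrightarrow> vars t = {}"

fun subst :: "('v \<Rightarrow> ('f,'o,'c,'w) trm) \<Rightarrow> ('f,'o,'c,'v) trm \<Rightarrow> ('f,'o,'c,'w) trm" where
  "subst \<sigma> (V x) = \<sigma> x"
| "subst \<sigma> (Fn f ts) = Fn f (map (subst \<sigma>) ts)"
| "subst \<sigma> (Op g ts) = Op g (map (subst \<sigma>) ts)"
| "subst \<sigma> (Cn c) = Cn c"

fun is_C :: "('f,'o,'c,'v) trm \<Rightarrow> bool" where
  "is_C (Cn c) = True"
| "is_C _ = False"

fun cval :: "('f,'o,'c,'v) trm \<Rightarrow> 'c" where
  "cval (Cn c) = c"
| "cval _ = undefined"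

fun passive_trm :: "('f,'o,'c,'v) trm \<Rightarrow> bool" where
  "passive_trm (V x) = True"
| "passive_trm (Fn f ts) = (\<forall>t\<in>set ts. passive_trm t)"
| "passive_trm (Op g ts) = False"
| "passive_trm (Cn c) = False"

fun nopassive_trm :: "('f,'o,'c,'v) trm \<Rightarrow> bool" where
  "nopassive_trm (V x) = True"
| "nopassive_trm (Fn f ts) = False"
| "nopassive_trm (Op g ts) = (\<forall>t\<in>set ts. nopassive_trm t)"
| "nopassive_trm (Cn c) = True"

fun interp :: "('f,'o,'c,'v) trm \<Rightarrow> bool" where
  "interp (V x) = False"
| "interp (Fn f ts) = False"
| "interp (Op g ts) = (\<forall>t\<in>set ts. interp t)"
| "interp (Cn c) = True"

fun linear :: "('f,'o,'c,'v) trm \<Rightarrow> bool" where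
  "linear (V x) = True"
| "linear (Fn f ts) = ((\<forall>t\<in>set ts. linear t) \<and>
      (\<forall>i j. i < j \<and> j < length ts \<longrightarrow> vars (ts!i) \<inter> vars (ts!j) = {}))"
| "linear (Op g ts) = ((\<forall>t\<in>set ts. linear t) \<and>
      (\<forall>i j. i < j \<and> j < length ts \<longrightarrow> vars (ts!i) \<inter> vars (ts!j) = {}))"
| "linear (Cn c) = True"

section \<open>Concrete domain and its lattice abstraction\<close>

text \<open>alpha d is the abstraction alpha({d}) of a single concrete value; the Galois
  connection is alpha(S) = Sup (alpha ` S), gamma(l) = {d. alpha d \<le> l}.\<close>
record ('d,'o,'l) absdom =
  alpha :: "'d \<Rightarrow> 'l"
  opc :: "'o \<Rightarrow> 'd list \<Rightarrow> 'd"
  opa :: "'o \<Rightarrow> 'l list \<Rightarrow> 'l"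

definition atom :: "'l::complete_lattice \<Rightarrow> bool" where
  "atom a \<longleftrightarrow> a \<noteq> bot \<and> (\<forall>b. b \<le> a \<longrightarrow> b = bot \<or> b = a)"

definition valid_dom :: "('d,'o,'l::complete_lattice) absdom \<Rightarrow> bool" where
  "valid_dom D \<longleftrightarrow>
     (\<forall>l::'l. l \<noteq> bot \<longrightarrow> (\<exists>a. atom a \<and> a \<le> l)) \<and>
     inj (alpha D) \<and> (\<forall>d. atom (alpha D d)) \<and> (\<forall>a. atom a \<longrightarrow> a \<in> range (alpha D)) \<and>
     (\<forall>g ds ls. length ds = length ls \<and> (\<forall>i<length ds. alpha D (ds!i) \<le> ls!i)
        \<longrightarrow> alpha D (opc D g ds) \<le> opa D g ls)"

fun ceval :: "('d,'o,'l) absdom \<Rightarrow> ('f,'o,'d,'v) trm \<Rightarrow> ('f,'o,'d,'v) trm" where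
  "ceval D (V x) = V x"
| "ceval D (Fn f ts) = Fn f (map (ceval D) ts)"
| "ceval D (Op g ts) = (if (\<forall>t\<in>set ts. is_C (ceval D t))
      then Cn (opc D g (map (\<lambda>t. cval (ceval D t)) ts))
      else Op g (map (ceval D) ts))"
| "ceval D (Cn d) = Cn d"

fun aeval :: "('d,'o,'l::complete_lattice) absdom \<Rightarrow> ('f,'o absop,'l,'q) trm \<Rightarrow> 'l" where
  "aeval D (Cn l) = l"
| "aeval D (Op (AOp g) ts) = opa D g (map (aeval D) ts)"
| "aeval D (Op AJoin ts) = Sup (set (map (aeval D) ts))"
| "aeval D (Op AMeet ts) = Inf (set (map (aeval D) ts))"
| "aeval D (V q) = bot"
| "aeval D (Fn f ts) = bot"

fun absT :: "('d,'o,'l) absdom \<Rightarrow> ('v \<Rightarrow> ('f,'o absop,'l,'q) trm) \<Rightarrow> ('f,'o,'d,'v) trm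
     \<Rightarrow> ('f,'o absop,'l,'q) trm" where
  "absT D \<phi> (V x) = \<phi> x"
| "absT D \<phi> (Fn f ts) = Fn f (map (absT D \<phi>) ts)"
| "absT D \<phi> (Op g ts) = Op (AOp g) (map (absT D \<phi>) ts)"
| "absT D \<phi> (Cn d) = Cn (alpha D d)"

inductive tle :: "('d,'o,'l::complete_lattice) absdom \<Rightarrow> ('f,'o absop,'l,'q) trm
     \<Rightarrow> ('f,'o absop,'l,'q) trm \<Rightarrow> bool" for D where
  tle_interp: "interp s \<Longrightarrow> interp s' \<Longrightarrow> aeval D s \<le> aeval D s' \<Longrightarrow> tle D s s'"
| tle_V: "tle D (V q) (V q)"
| tle_F: "list_all2 (tle D) ss ss' \<Longrightarrow> tle D (Fn f ss) (Fn f ss')"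
| tle_O: "list_all2 (tle D) ss ss' \<Longrightarrow> tle D (Op g ss) (Op g ss')"

section \<open>Lattice tree automata\<close>

datatype ('f,'a,'l,'q) tr =
    TF 'f "'q list" 'q    \<comment> \<open>passive_trm symbol transition f(q1..qn) -> q\<close>
  | TO 'a "'q list" 'q
  | TL 'l 'q
  | TE 'q 'q             \<comment> \<open>epsilon transition q -> q'\<close>

record ('f,'o,'l,'q) lta =
  states :: "'q set"
  finals :: "'q set"
  trans :: "('f,'o absop,'l,'q) tr set"

fun tr_states :: "('f,'a,'l,'q) tr \<Rightarrow> 'q set" where
  "tr_states (TF f qs q) = insert q (set qs)"
| "tr_states (TO g qs q) = insert q (set qs)"
| "tr_states (TL l q) = {q}"
| "tr_states (TE q1 q2) = {q1, q2}"

definition wf_lta :: "('f,'o,'l,'q) lta \<Rightarrow> bool" where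
  "wf_lta A \<longleftrightarrow> finite (states A) \<and> finite (trans A) \<and> finals A \<subseteq> states A \<and>
     (\<forall>t\<in>trans A. tr_states t \<subseteq> states A)"

inductive run :: "('d,'o,'l::complete_lattice) absdom \<Rightarrow> ('f,'o,'l,'q) lta
     \<Rightarrow> ('f,'o absop,'l,'q) trm \<Rightarrow> 'q \<Rightarrow> bool" for D A where
  run_V: "run D A (V q) q"
| run_E: "run D A t q1 \<Longrightarrow> TE q1 q2 \<in> trans A \<Longrightarrow> run D A t q2"
| run_F: "TF f qs q \<in> trans A \<Longrightarrow> list_all2 (run D A) ts qs \<Longrightarrow> run D A (Fn f ts) q"
| run_O: "TO g qs q \<in> trans A \<Longrightarrow> list_all2 (run D A) ts qs \<Longrightarrow> run D A (Op g ts) q"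
| run_L: "TL l q \<in> trans A \<Longrightarrow> interp u \<Longrightarrow> aeval D u \<le> l \<Longrightarrow> run D A u q"

definition lang :: "('d,'o,'l::complete_lattice) absdom \<Rightarrow> ('f,'o,'l,'q) lta \<Rightarrow> 'q
     \<Rightarrow> ('f,'o,'d,'v) trm set" where
  "lang D A q = {t. ground t \<and> (\<exists>s. tle D (absT D (\<lambda>_. undefined) t) s \<and> run D A s q)}"

definition lang_A :: "('d,'o,'l::complete_lattice) absdom \<Rightarrow> ('f,'o,'l,'q) lta
     \<Rightarrow> ('f,'o,'d,'v) trm set" where
  "lang_A D A = (\<Union>q\<in>finals A. lang D A q)"

section \<open>Conditional term rewriting\<close>

type_synonym ('f,'o,'d,'v) cond = "('d list \<Rightarrow> bool) \<times> ('f,'o,'d,'v) trm list"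
type_synonym ('f,'o,'d,'v) crule =
  "('f,'o,'d,'v) trm \<times> ('f,'o,'d,'v) trm \<times> ('f,'o,'d,'v) cond list"

definition cond_holds :: "('d,'o,'l) absdom \<Rightarrow> ('v \<Rightarrow> ('f,'o,'d,'w) trm)
     \<Rightarrow> ('f,'o,'d,'v) cond \<Rightarrow> bool" where
  "cond_holds D \<theta> c \<longleftrightarrow>
     (\<forall>t\<in>set (snd c). is_C (ceval D (subst \<theta> t))) \<and>
     fst c (map (\<lambda>t. cval (ceval D (subst \<theta> t))) (snd c))"

definition conds_hold :: "('d,'o,'l) absdom \<Rightarrow> ('v \<Rightarrow> ('f,'o,'d,'w) trm)
     \<Rightarrow> ('f,'o,'d,'v) cond list \<Rightarrow> bool" where
  "conds_hold D \<theta> cs \<longleftrightarrow> (\<forall>c\<in>set cs. cond_holds D \<theta> c)"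

definition cvars :: "('f,'o,'d,'v) cond list \<Rightarrow> 'v set" where
  "cvars cs = (\<Union>c\<in>set cs. \<Union>t\<in>set (snd c). vars t)"

definition ctrs :: "('f,'o,'d,'v) crule set \<Rightarrow> bool" where
  "ctrs R \<longleftrightarrow> (\<forall>(l,r,cs)\<in>R. (\<forall>x. l \<noteq> V x) \<and> passive_trm l \<and> vars r \<subseteq> vars l \<and>
      (\<forall>c\<in>set cs. \<forall>t\<in>set (snd c). nopassive_trm t \<and> vars t \<subseteq> vars l))"

definition left_linear :: "('f,'o,'d,'v) crule set \<Rightarrow> bool" where
  "left_linear R \<longleftrightarrow> (\<forall>(l,r,cs)\<in>R. linear l)"

inductive ctx_rep :: "('f,'o,'c,'v) trm \<Rightarrow> ('f,'o,'c,'v) trm \<Rightarrow> ('f,'o,'c,'v) trm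
     \<Rightarrow> ('f,'o,'c,'v) trm \<Rightarrow> bool" for u v where
  ctx_root: "ctx_rep u v u v"
| ctx_F: "i < length ts \<Longrightarrow> ctx_rep u v (ts!i) t' \<Longrightarrow> ctx_rep u v (Fn f ts) (Fn f (ts[i := t']))"
| ctx_O: "i < length ts \<Longrightarrow> ctx_rep u v (ts!i) t' \<Longrightarrow> ctx_rep u v (Op g ts) (Op g (ts[i := t']))"

definition rstep :: "('d,'o,'l) absdom \<Rightarrow> ('f,'o,'d,'v) crule set
     \<Rightarrow> ('f,'o,'d,'w) trm \<Rightarrow> ('f,'o,'d,'w) trm \<Rightarrow> bool" where
  "rstep D R s t \<longleftrightarrow> (\<exists>l r cs \<sigma> s'. (l,r,cs) \<in> R \<and> (\<forall>x. ground (\<sigma> x)) \<and>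
      conds_hold D \<sigma> cs \<and> ctx_rep (subst \<sigma> l) (subst \<sigma> r) s s' \<and> t = ceval D s')"

definition rstar :: "('d,'o,'l) absdom \<Rightarrow> ('f,'o,'d,'v) crule set
     \<Rightarrow> ('f,'o,'d,'w) trm set \<Rightarrow> ('f,'o,'d,'w) trm set" where
  "rstar D R L = {t. \<exists>s\<in>L. (rstep D R)\<^sup>*\<^sup>* s t}"

section \<open>Completion\<close>

type_synonym ('f,'o,'d,'v) ceqn =
  "('f,'o,'d,'v) trm \<times> ('f,'o,'d,'v) trm \<times> ('f,'o,'d,'v) cond list"

definition linear_eqs :: "('f,'o,'d,'v) ceqn set \<Rightarrow> bool" where
  "linear_eqs E \<longleftrightarrow> (\<forall>(u,v,cs)\<in>E. linear u \<and> linear v)"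

definition matching :: "('d,'o,'l::complete_lattice) absdom \<Rightarrow> ('f,'o,'l,'q) lta
     \<Rightarrow> ('f,'o,'d,'v) trm \<Rightarrow> 'q \<Rightarrow> ('v \<Rightarrow> 'q) set" where
  "matching D A l q = {\<sigma>. run D A (absT D (V \<circ> \<sigma>) l) q}"

type_synonym ('f,'o,'d,'l,'q,'v) solver =
  "('v \<Rightarrow> 'q) \<Rightarrow> ('f,'o,'l,'q) lta \<Rightarrow> ('f,'o,'d,'v) cond list
     \<Rightarrow> ('v \<Rightarrow> ('f,'o absop,'l,'q) trm) set"

definition sound_solver :: "('d,'o,'l::complete_lattice) absdom \<Rightarrow> ('f,'o,'d,'l,'q,'v) solver
     \<Rightarrow> bool" where
  "sound_solver D Solve \<longleftrightarrow> (\<forall>\<sigma> A cs.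
     (\<forall>\<sigma>'\<in>Solve \<sigma> A cs. \<forall>x. if x \<in> cvars cs then (\<exists>l. \<sigma>' x = Cn l) else \<sigma>' x = V (\<sigma> x)) \<and>
     (\<forall>\<theta> :: 'v \<Rightarrow> ('f,'o,'d,'v) trm.
        (\<forall>x. ground (\<theta> x)) \<and> (\<forall>x\<in>cvars cs. \<theta> x \<in> lang D A (\<sigma> x)) \<and> conds_hold D \<theta> cs
        \<longrightarrow> (\<exists>\<sigma>'\<in>Solve \<sigma> A cs. \<forall>x\<in>cvars cs.
              \<exists>l. \<sigma>' x = Cn l \<and> alpha D (cval (ceval D (\<theta> x))) \<le> l)))"

definition omega :: "('d,'o,'l::complete_lattice) absdom \<Rightarrow> ('f,'o,'d,'l,'q,'v) solver
     \<Rightarrow> ('f,'o,'l,'q) lta \<Rightarrow> ('f,'o,'d,'v) crule \<Rightarrow> 'q \<Rightarrow> ('v \<Rightarrow> ('f,'o absop,'l,'q) trm) set" where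
  "omega D Solve A rl q = (case rl of (l,r,cs) \<Rightarrow>
     {\<sigma>'. \<exists>\<sigma>\<in>matching D A l q. \<sigma>' \<in> Solve \<sigma> A cs \<and>
        \<not> (\<exists>\<sigma>''. tle D (absT D \<sigma>' r) (absT D \<sigma>'' r) \<and> run D A (absT D \<sigma>'' r) q)})"

inductive norm :: "('d,'o,'l::complete_lattice) absdom \<Rightarrow> ('f,'o,'l,'q) lta
     \<Rightarrow> ('f,'o absop,'l,'q) trm \<Rightarrow> 'q \<Rightarrow> ('f,'o absop,'l,'q) tr set \<Rightarrow> bool" for D A where
  norm_V: "norm D A (V q) q {}"
| norm_old: "q \<in> states A \<Longrightarrow> run D A t q \<Longrightarrow> norm D A t q {}"
| norm_C: "q \<notin> states A \<Longrightarrow> norm D A (Cn l) q {TL l q}"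
| norm_F: "q \<notin> states A \<Longrightarrow> length qs = length ts \<Longrightarrow> length Ns = length ts \<Longrightarrow>
     (\<forall>i<length ts. norm D A (ts!i) (qs!i) (Ns!i)) \<Longrightarrow>
     norm D A (Fn f ts) q (insert (TF f qs q) (\<Union>(set Ns)))"
| norm_O: "q \<notin> states A \<Longrightarrow> length qs = length ts \<Longrightarrow> length Ns = length ts \<Longrightarrow>
     (\<forall>i<length ts. norm D A (ts!i) (qs!i) (Ns!i)) \<Longrightarrow>
     norm D A (Op g ts) q (insert (TO g qs q) (\<Union>(set Ns)))"

definition cpairs :: "('d,'o,'l::complete_lattice) absdom \<Rightarrow> ('f,'o,'d,'v) crule set
     \<Rightarrow> ('f,'o,'d,'l,'q,'v) solver \<Rightarrow> ('f,'o,'l,'q) lta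
     \<Rightarrow> (('f,'o,'d,'v) crule \<times> 'q \<times> ('f,'o absop,'l,'q) trm) set" where
  "cpairs D R Solve A = {(rl, q, s). rl \<in> R \<and> q \<in> states A \<and>
      (\<exists>\<sigma>'\<in>omega D Solve A rl q. s = absT D \<sigma>' (fst (snd rl)))}"

definition cstep :: "('d,'o,'l::complete_lattice) absdom \<Rightarrow> ('f,'o,'d,'v) crule set
     \<Rightarrow> ('f,'o,'d,'l,'q,'v) solver \<Rightarrow> ('f,'o,'l,'q) lta \<Rightarrow> ('f,'o,'l,'q) lta \<Rightarrow> bool" where
  "cstep D R Solve A A' \<longleftrightarrow> (\<exists>qn Ns.
     (\<forall>j\<in>cpairs D R Solve A. qn j \<notin> states A \<and> norm D A (snd (snd j)) (qn j) (Ns j)) \<and>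
     A' = \<lparr>states = states A \<union> (\<Union>j\<in>cpairs D R Solve A. insert (qn j) (\<Union>(tr_states ` Ns j))),
           finals = finals A,
           trans = trans A \<union> (\<Union>j\<in>cpairs D R Solve A. insert (TE (qn j) (fst (snd j))) (Ns j))\<rparr>)"

fun ren_tr :: "('q \<Rightarrow> 'q) \<Rightarrow> ('f,'a,'l,'q) tr \<Rightarrow> ('f,'a,'l,'q) tr" where
  "ren_tr h (TF f qs q) = TF f (map h qs) (h q)"
| "ren_tr h (TO g qs q) = TO g (map h qs) (h q)"
| "ren_tr h (TL l q) = TL l (h q)"
| "ren_tr h (TE q1 q2) = TE (h q1) (h q2)"

definition rename :: "'q \<Rightarrow> 'q \<Rightarrow> ('f,'o,'l,'q) lta \<Rightarrow> ('f,'o,'l,'q) lta" where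
  "rename q1 q2 A = (let h = (\<lambda>x. if x = q1 then q2 else x) in
     \<lparr>states = h ` states A, finals = h ` finals A, trans = ren_tr h ` trans A\<rparr>)"

definition merge_step :: "('d,'o,'l::complete_lattice) absdom \<Rightarrow> ('f,'o,'d,'v) ceqn set
     \<Rightarrow> ('f,'o,'l,'q) lta \<Rightarrow> ('f,'o,'l,'q) lta \<Rightarrow> bool" where
  "merge_step D E A A' \<longleftrightarrow> (\<exists>u v cs \<sigma> q1 q2. (u,v,cs) \<in> E \<and>
     q1 \<in> states A \<and> q2 \<in> states A \<and> q1 \<noteq> q2 \<and>
     run D A (absT D (V \<circ> \<sigma>) u) q1 \<and> run D A (absT D (V \<circ> \<sigma>) v) q2 \<and>
     (\<exists>\<theta> :: 'v \<Rightarrow> ('f,'o,'d,'v) trm. (\<forall>x. ground (\<theta> x)) \<and>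
        (\<forall>x\<in>vars u \<union> vars v. \<theta> x \<in> lang D A (\<sigma> x)) \<and> conds_hold D \<theta> cs) \<and>
     (A' = rename q2 q1 A \<or> A' = rename q1 q2 A))"

definition merge_nf :: "('d,'o,'l::complete_lattice) absdom \<Rightarrow> ('f,'o,'d,'v) ceqn set
     \<Rightarrow> ('f,'o,'l,'q) lta \<Rightarrow> ('f,'o,'l,'q) lta \<Rightarrow> bool" where
  "merge_nf D E A A' \<longleftrightarrow> (merge_step D E)\<^sup>*\<^sup>* A A' \<and> \<not> (\<exists>A''. merge_step D E A' A'')"

definition lam_reach :: "('f,'o,'l,'q) lta \<Rightarrow> 'l \<Rightarrow> 'q \<Rightarrow> bool" where
  "lam_reach A l q \<longleftrightarrow> (\<exists>q0. TL l q0 \<in> trans A \<and> (q0, q) \<in> {(a,b). TE a b \<in> trans A}\<^sup>*)"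

text \<open>eval(A): closure under evaluation of interpreted transitions; added lambda
  transitions may be enlarged (widening)\<close>
definition eval_auto :: "('d,'o,'l::complete_lattice) absdom \<Rightarrow> ('f,'o,'l,'q) lta
     \<Rightarrow> ('f,'o,'l,'q) lta \<Rightarrow> bool" where
  "eval_auto D A A' \<longleftrightarrow> states A' = states A \<and> finals A' = finals A \<and> trans A \<subseteq> trans A' \<and>
     (\<forall>t\<in>trans A' - trans A. \<exists>l q g qs ls. t = TL l q \<and> TO g qs q \<in> trans A' \<and>
        length ls = length qs \<and> (\<forall>i<length qs. lam_reach A' (ls!i) (qs!i)) \<and>
        aeval D (Op g (map Cn ls) :: ('f,'o absop,'l,'q) trm) \<le> l) \<and>
     (\<forall>g qs q ls. TO g qs q \<in> trans A' \<and> length ls = length qs \<and>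
        (\<forall>i<length qs. lam_reach A' (ls!i) (qs!i)) \<longrightarrow>
        (\<exists>l. TL l q \<in> trans A' \<and> aeval D (Op g (map Cn ls) :: ('f,'o absop,'l,'q) trm) \<le> l))"

definition comp_step :: "('d,'o,'l::complete_lattice) absdom \<Rightarrow> ('f,'o,'d,'v) crule set
     \<Rightarrow> ('f,'o,'d,'v) ceqn set \<Rightarrow> ('f,'o,'d,'l,'q,'v) solver
     \<Rightarrow> ('f,'o,'l,'q) lta \<Rightarrow> ('f,'o,'l,'q) lta \<Rightarrow> bool" where
  "comp_step D R E Solve A A' \<longleftrightarrow> (\<exists>A0 A1 A2. eval_auto D A A0 \<and> cstep D R Solve A0 A1 \<and>
     merge_nf D E A1 A2 \<and> eval_auto D A2 A')"

definition completion_terminates :: "('d,'o,'l::complete_lattice) absdom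
     \<Rightarrow> ('f,'o,'d,'v) crule set \<Rightarrow> ('f,'o,'d,'v) ceqn set \<Rightarrow> ('f,'o,'d,'l,'q,'v) solver
     \<Rightarrow> ('f,'o,'l,'q) lta \<Rightarrow> ('f,'o,'l,'q) lta \<Rightarrow> bool" where
  "completion_terminates D R E Solve A Astar \<longleftrightarrow> (\<exists>seq k. seq 0 = A \<and>
     (\<forall>i\<le>k. comp_step D R E Solve (seq i) (seq (Suc i))) \<and>
     seq (Suc k) = seq k \<and> Astar = seq k)"

end

theory Submission
  imports Defs
begin


lemma ceval_idem: "ceval D (ceval D t) = ceval D t"
proof (induction t)
  case (Op g ts)
  then show ?case by (auto simp: comp_def intro!: map_cong)
qed (auto simp: comp_def intro!: map_cong)

lemma vars_ceval: "vars (ceval D t) \<subseteq> vars t"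
  by (induction t) auto

lemma ceval_subst_ceval: "ceval D (subst (ceval D \<circ> \<sigma>) t) = ceval D (subst \<sigma> t)"
proof (induction t)
  case (V x) then show ?case by (simp add: ceval_idem)
next
  case (Op g ts)
  have e: "\<And>t. t \<in> set ts \<Longrightarrow> ceval D (subst (\<lambda>a. ceval D (\<sigma> a)) t) = ceval D (subst \<sigma> t)"
    using Op.IH by (simp add: comp_def)
  have m: "map (\<lambda>x. cval (ceval D (subst (\<lambda>a. ceval D (\<sigma> a)) x))) ts = map (\<lambda>x. cval (ceval D (subst \<sigma> x))) ts"
    using e by simp
  have m2: "map (\<lambda>x. ceval D (subst (\<lambda>a. ceval D (\<sigma> a)) x)) ts = map (\<lambda>x. ceval D (subst \<sigma> x)) ts"
    using e by simp
  have b: "(\<forall>t\<in>set ts. is_C (ceval D (subst (\<lambda>a. ceval D (\<sigma> a)) t))) = (\<forall>t\<in>set ts. is_C (ceval D (subst \<sigma> t)))"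
    using e by simp
  show ?case unfolding subst.simps ceval.simps comp_def set_map ball_simps
    by (simp only: m m2 b map_map comp_def Ball_image_comp)
qed (auto simp: comp_def intro!: map_cong)

lemma interp_isC: "interp c \<Longrightarrow> is_C (ceval D c)"
  by (induction c) auto

lemma isC_interp: "ground c \<Longrightarrow> is_C (ceval D c) \<Longrightarrow> interp c"
proof (induction c)
  case (Op g ts)
  then show ?case by (auto simp: ground_def split: if_splits)
qed (auto simp: ground_def)

lemma isC_var: "nopassive_trm t \<Longrightarrow> x \<in> vars t \<Longrightarrow> is_C (ceval D (subst \<sigma> t)) \<Longrightarrow> is_C (ceval D (\<sigma> x))"
proof (induction t)
  case (Op g ts)
  then show ?case by (auto split: if_splits)
qed auto

lemma interp_absT_vars: "interp (absT D \<phi> u) \<Longrightarrow> x \<in> vars u \<Longrightarrow> interp (\<phi> x)"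
  by (induction u) auto

lemma interp_absT_subst: "interp (absT D \<phi> u) \<Longrightarrow> (\<forall>x\<in>vars u. interp (\<sigma> x)) \<Longrightarrow> interp (subst \<sigma> u)"
  by (induction u) auto

lemma absT_cong: "(\<And>x. x \<in> vars u \<Longrightarrow> \<phi> x = \<psi> x) \<Longrightarrow> absT D \<phi> u = absT D \<psi> u"
  by (induction u) auto

lemma interp_absT_ground: "interp (absT D \<phi> c) \<Longrightarrow> ground c \<Longrightarrow> interp c"
  by (induction c) (auto simp: ground_def)

lemma K0:
  assumes "valid_dom D"
  shows "interp c \<Longrightarrow> alpha D (cval (ceval D c)) \<le> aeval D (absT D \<phi> c)"
proof (induction c)
  case (Op g ts)
  have C: "\<forall>t\<in>set ts. is_C (ceval D t)" using Op.prems interp_isC by auto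
  have "alpha D (opc D g (map (\<lambda>t. cval (ceval D t)) ts)) \<le> opa D g (map (aeval D) (map (absT D \<phi>) ts))"
    using assms Op unfolding valid_dom_def by (auto simp del: aeval.simps)
  then show ?case using C by simp
qed auto

lemma M:
  assumes "valid_dom D"
  shows "interp (absT D \<phi> u) \<Longrightarrow> (\<forall>x\<in>vars u. interp (\<sigma> x) \<and> alpha D (cval (ceval D (\<sigma> x))) \<le> aeval D (\<phi> x))
    \<Longrightarrow> alpha D (cval (ceval D (subst \<sigma> u))) \<le> aeval D (absT D \<phi> u)"
proof (induction u)
  case (Op g ts)
  have C: "\<forall>t\<in>set ts. is_C (ceval D (subst \<sigma> t))"
    using Op.prems interp_isC interp_absT_subst by fastforce
  have "alpha D (opc D g (map (\<lambda>t. cval (ceval D t)) (map (subst \<sigma>) ts))) \<le> opa D g (map (aeval D) (map (absT D \<phi>) ts))"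
    using assms Op unfolding valid_dom_def by (auto simp del: aeval.simps)
  then show ?case using C by simp
qed auto



inductive ap :: "('d,'o,'l::complete_lattice) absdom \<Rightarrow> ('f,'o,'d,'v) trm \<Rightarrow> ('f,'o absop,'l,'q) trm \<Rightarrow> bool"
  for D where
  ap_I: "interp c \<Longrightarrow> interp b \<Longrightarrow> alpha D (cval (ceval D c)) \<le> aeval D b \<Longrightarrow> ap D c b"
| ap_F: "list_all2 (ap D) cs bs \<Longrightarrow> ap D (Fn f cs) (Fn f bs)"
| ap_O: "list_all2 (ap D) cs bs \<Longrightarrow> ap D (Op g cs) (Op (AOp g) bs)"

lemma interp_ground: "interp c \<Longrightarrow> ground c"
  by (induction c) (auto simp: ground_def)

lemma ap_ground: "ap D c b \<Longrightarrow> ground c \<and> ground b"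
proof (induction rule: ap.induct)
  case (ap_I c b) then show ?case by (simp add: interp_ground)
next
  case (ap_F cs bs f)
  then show ?case by (auto simp: ground_def list_all2_conv_all_nth in_set_conv_nth)
next
  case (ap_O cs bs g)
  then show ?case by (auto simp: ground_def list_all2_conv_all_nth in_set_conv_nth)
qed

lemma ap_noninterp: "ap D c b \<Longrightarrow> \<not> interp c \<Longrightarrow> \<not> interp b"
proof (induction rule: ap.induct)
  case (ap_O cs bs g)
  then show ?case by (auto simp: list_all2_conv_all_nth in_set_conv_nth) (metis nth_mem)
qed auto

lemma ap_tle:
  assumes vd: "valid_dom D"
  shows "ap D c b \<Longrightarrow> tle D (absT D \<phi> (ceval D c)) b \<and>
     (is_C (ceval D c) \<longrightarrow> interp b \<and> alpha D (cval (ceval D c)) \<le> aeval D b)"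
proof (induction rule: ap.induct)
  case (ap_I c b)
  obtain v where v: "ceval D c = Cn v" using interp_isC[OF ap_I(1), of D] by (cases "ceval D c") auto
  show ?case using ap_I v by (auto intro!: tle_interp)
next
  case (ap_F cs bs f)
  then show ?case by (auto intro!: tle_F simp: list_all2_conv_all_nth)
next
  case (ap_O cs bs g)
  show ?case
  proof (cases "\<forall>t\<in>set cs. is_C (ceval D t)")
    case True
    have len: "length cs = length bs" using ap_O list_all2_lengthD by blast
    have i: "\<forall>i<length bs. interp (bs!i) \<and> alpha D (cval (ceval D (cs!i))) \<le> aeval D (bs!i)"
      using ap_O True len by (auto simp: list_all2_conv_all_nth)
    then have ib: "interp (Op (AOp g) bs)" by (auto simp: in_set_conv_nth)
    have "alpha D (opc D g (map (\<lambda>t. cval (ceval D t)) cs)) \<le> opa D g (map (aeval D) bs)"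
      using vd i len unfolding valid_dom_def by auto
    then show ?thesis using True ib by (auto intro!: tle_interp)
  next
    case False
    then show ?thesis using ap_O by (auto intro!: tle_O simp: list_all2_conv_all_nth)
  qed
qed

lemma tle_Cn_inv: "tle D (Cn l) b \<Longrightarrow> interp b \<and> l \<le> aeval D b"
  by (cases rule: tle.cases) auto

lemma tle_V_inv: "tle D (V q) b \<Longrightarrow> b = V q"
  by (cases rule: tle.cases) auto

lemma tle_ap:
  assumes vd: "valid_dom D"
  shows "ground c \<Longrightarrow> tle D (absT D \<phi> c) b \<Longrightarrow> ap D c b"
proof (induction c arbitrary: b)
  case (V x) then show ?case by (simp add: ground_def)
next
  case (Cn d)
  then show ?case using tle_Cn_inv[of D] by (auto intro!: ap_I)
next
  case (Fn f cs)
  from Fn.prems(2) obtain bs where b: "b = Fn f bs" "list_all2 (tle D) (map (absT D \<phi>) cs) bs"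
    by (cases rule: tle.cases) auto
  show ?case unfolding b using Fn b
    by (auto intro!: ap_F simp: list_all2_conv_all_nth ground_def)
next
  case (Op g cs)
  from Op.prems(2) show ?case
  proof (cases rule: tle.cases)
    case tle_interp
    have ic: "interp (Op g cs)" using interp_absT_ground tle_interp Op.prems by blast
    show ?thesis using tle_interp K0[OF vd ic, of \<phi>] ic by (auto intro!: ap_I)
  next
    case (tle_O ss ss')
    then show ?thesis using Op by (auto intro!: ap_O simp: list_all2_conv_all_nth ground_def)
  qed auto
qed

lemma tle_refl: "tle D t t"
proof (induction t)
  case (Fn f ts) then show ?case by (auto intro!: tle_F simp: list_all2_conv_all_nth)
next
  case (Op g ts) then show ?case by (auto intro!: tle_O simp: list_all2_conv_all_nth)
qed (auto intro: tle.intros)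



definition Erel :: "('f,'o,'l,'q) lta \<Rightarrow> ('q \<times> 'q) set" where
  "Erel A = {(a,b). TE a b \<in> trans A}"

lemma run_mono: "run D A t q \<Longrightarrow> trans A \<subseteq> trans A' \<Longrightarrow> run D A' t q"
proof (induction rule: run.induct)
  case (run_F f qs q ts)
  then show ?case by (auto intro!: run.run_F elim!: list_all2_mono)
next
  case (run_O g qs q ts)
  then show ?case by (auto intro!: run.run_O elim!: list_all2_mono)
qed (auto intro: run.intros)
lemma run_Echain: "(q0, q) \<in> (Erel A)\<^sup>* \<Longrightarrow> run D A t q0 \<Longrightarrow> run D A t q"
  by (induction rule: rtrancl_induct) (auto simp: Erel_def intro: run_E)
lemma run_Fn_inv: "run D A s q \<Longrightarrow> s = Fn f ts \<Longrightarrow>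
   \<exists>qs q0. TF f qs q0 \<in> trans A \<and> list_all2 (run D A) ts qs \<and> (q0, q) \<in> (Erel A)\<^sup>*"
proof (induction rule: run.induct)
  case (run_E t q1 q2)
  then obtain qs q0 where h: "TF f qs q0 \<in> trans A" "list_all2 (run D A) ts qs" "(q0, q1) \<in> (Erel A)\<^sup>*" by blast
  have "(q1, q2) \<in> Erel A" using run_E(2) by (simp add: Erel_def)
  then have "(q0, q2) \<in> (Erel A)\<^sup>*" using h(3) by (rule rtrancl_into_rtrancl[rotated])
  then show ?case using h by blast
next
  case (run_F f' qs q ts')
  then have "list_all2 (run D A) ts qs" by (auto elim: list_all2_mono)
  then show ?case using run_F by blast
next
  case (run_V q) then show ?case by simp
next
  case (run_O g qs q ts') then show ?case by simp
next
  case (run_L l q u) then show ?case by simp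
qed

lemma run_Op_inv: "run D A s q \<Longrightarrow> s = Op g ts \<Longrightarrow> \<not> interp s \<Longrightarrow>
   \<exists>qs q0. TO g qs q0 \<in> trans A \<and> list_all2 (run D A) ts qs \<and> (q0, q) \<in> (Erel A)\<^sup>*"
proof (induction rule: run.induct)
  case (run_E t q1 q2)
  then obtain qs q0 where h: "TO g qs q0 \<in> trans A" "list_all2 (run D A) ts qs" "(q0, q1) \<in> (Erel A)\<^sup>*" by blast
  have "(q1, q2) \<in> Erel A" using run_E(2) by (simp add: Erel_def)
  then have "(q0, q2) \<in> (Erel A)\<^sup>*" using h(3) by (rule rtrancl_into_rtrancl[rotated])
  then show ?case using h by blast
next
  case (run_O g' qs q ts')
  then have "list_all2 (run D A) ts qs" by (auto elim: list_all2_mono)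
  then show ?case using run_O by blast
next
  case (run_V q) then show ?case by simp
next
  case (run_F f qs q ts') then show ?case by simp
next
  case (run_L l q u) then show ?case by simp
qed


definition closed :: "('f,'o,'l,'q) lta \<Rightarrow> bool" where
  "closed A \<longleftrightarrow> (\<forall>t\<in>trans A. tr_states t \<subseteq> states A)"

lemma run_target_states: "run D A s q \<Longrightarrow> closed A \<Longrightarrow> (\<forall>x. s \<noteq> V x) \<Longrightarrow> \<not> interp s \<Longrightarrow> q \<in> states A"
proof (induction rule: run.induct)
  case (run_E t q1 q2) then show ?case by (force simp: closed_def)
next
  case (run_F f qs q ts) then show ?case by (force simp: closed_def)
next
  case (run_O g qs q ts) then show ?case by (force simp: closed_def)
qed auto



lemma run_V_inv: "run D A s q \<Longrightarrow> s = V p \<Longrightarrow> (p, q) \<in> (Erel A)\<^sup>*"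
proof (induction rule: run.induct)
  case (run_E t q1 q2)
  have "(q1, q2) \<in> Erel A" using run_E(2) by (simp add: Erel_def)
  then show ?case using run_E.IH[OF run_E.prems] by (rule rtrancl_into_rtrancl[rotated])
qed simp_all

lemma run_plug: "run D A (absT D \<phi> r) q \<Longrightarrow>
   (\<forall>x\<in>vars r. \<phi> x = \<psi> x \<or> (\<exists>p. \<phi> x = V p \<and> run D A (\<psi> x) p)) \<Longrightarrow> run D A (absT D \<psi> r) q"
proof (induction r arbitrary: q)
  case (V x)
  show ?case
  proof (cases "\<phi> x = \<psi> x")
    case True then show ?thesis using V by simp
  next
    case False
    then obtain p where p: "\<phi> x = V p" "run D A (\<psi> x) p" using V.prems(2) by auto
    have "(p, q) \<in> (Erel A)\<^sup>*" using run_V_inv[of D A "V p" q p] V.prems(1) p(1) by simp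
    then show ?thesis using run_Echain p(2) by simp
  qed
next
  case (Cn c) then show ?case by simp
next
  case (Fn f rs)
  obtain qs q0 where r: "TF f qs q0 \<in> trans A" "list_all2 (run D A) (map (absT D \<phi>) rs) qs" "(q0, q) \<in> (Erel A)\<^sup>*"
    using run_Fn_inv[OF Fn.prems(1)] by auto
  have len: "length rs = length qs" using r(2) list_all2_lengthD by fastforce
  have "run D A (absT D \<psi> (rs!i)) (qs!i)" if i: "i < length rs" for i
  proof (rule Fn.IH)
    show "rs!i \<in> set rs" using i by simp
    show "run D A (absT D \<phi> (rs!i)) (qs!i)" using list_all2_nthD[OF r(2)] i by simp
    show "\<forall>x\<in>vars (rs!i). \<phi> x = \<psi> x \<or> (\<exists>p. \<phi> x = V p \<and> run D A (\<psi> x) p)"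
      proof
        fix x assume "x \<in> vars (rs!i)"
        then have "x \<in> vars (Fn f rs)" using nth_mem[OF i] by auto
        then show "\<phi> x = \<psi> x \<or> (\<exists>p. \<phi> x = V p \<and> run D A (\<psi> x) p)" using Fn.prems(2) by blast
      qed
  qed
  then have "list_all2 (run D A) (map (absT D \<psi>) rs) qs" using len by (simp add: list_all2_conv_all_nth)
  then have "run D A (Fn f (map (absT D \<psi>) rs)) q0" by (rule run.run_F[OF r(1)])
  then show ?case using run_Echain r(3) by simp
next
  case (Op g rs)
  show ?case
  proof (cases "interp (absT D \<phi> (Op g rs))")
    case True
    have "absT D \<phi> (Op g rs) = absT D \<psi> (Op g rs)"
    proof (rule absT_cong)
      fix x assume x: "x \<in> vars (Op g rs)"
      have "interp (\<phi> x)" using interp_absT_vars[OF True x] .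
      moreover have "\<phi> x = \<psi> x \<or> (\<exists>p. \<phi> x = V p \<and> run D A (\<psi> x) p)" using Op.prems(2) x by blast
      ultimately show "\<phi> x = \<psi> x" by auto
    qed
    then show ?thesis using Op.prems(1) by metis
  next
    case False
    obtain qs q0 where r: "TO (AOp g) qs q0 \<in> trans A" "list_all2 (run D A) (map (absT D \<phi>) rs) qs" "(q0, q) \<in> (Erel A)\<^sup>*"
      using run_Op_inv[OF Op.prems(1)] False by auto
    have len: "length rs = length qs" using r(2) list_all2_lengthD by fastforce
    have "run D A (absT D \<psi> (rs!i)) (qs!i)" if i: "i < length rs" for i
    proof (rule Op.IH)
      show "rs!i \<in> set rs" using i by simp
      show "run D A (absT D \<phi> (rs!i)) (qs!i)" using list_all2_nthD[OF r(2)] i by simp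
      show "\<forall>x\<in>vars (rs!i). \<phi> x = \<psi> x \<or> (\<exists>p. \<phi> x = V p \<and> run D A (\<psi> x) p)"
        proof
        fix x assume "x \<in> vars (rs!i)"
        then have "x \<in> vars (Op g rs)" using nth_mem[OF i] by auto
        then show "\<phi> x = \<psi> x \<or> (\<exists>p. \<phi> x = V p \<and> run D A (\<psi> x) p)" using Op.prems(2) by blast
      qed
    qed
    then have "list_all2 (run D A) (map (absT D \<psi>) rs) qs" using len by (simp add: list_all2_conv_all_nth)
    then have "run D A (Op (AOp g) (map (absT D \<psi>) rs)) q0" by (rule run.run_O[OF r(1)])
    then show ?thesis using run_Echain r(3) by simp
  qed
qed





lemma norm_run: "norm D A t q N \<Longrightarrow> trans A \<subseteq> trans A' \<Longrightarrow> N \<subseteq> trans A' \<Longrightarrow> run D A' t q"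
proof (induction rule: norm.induct)
  case (norm_V q) show ?case by (rule run.run_V)
next
  case (norm_old q t) show ?case using run_mono[OF norm_old(2) norm_old.prems(1)] .
next
  case (norm_C q l)
  have "TL l q \<in> trans A'" using norm_C.prems(2) by simp
  then show ?case by (rule run_L) simp_all
next
  case (norm_F q qs ts Ns f)
  have "\<forall>i<length ts. run D A' (ts!i) (qs!i)"
  proof (intro allI impI)
    fix i assume i: "i < length ts"
    have "Ns!i \<in> set Ns" using i norm_F.hyps(3) by simp
    then have "Ns!i \<subseteq> trans A'" using norm_F.prems(2) by blast
    then show "run D A' (ts!i) (qs!i)" using norm_F.IH i norm_F.prems(1) by blast
  qed
  then have "list_all2 (run D A') ts qs" using norm_F.hyps(2) by (simp add: list_all2_conv_all_nth)
  moreover have "TF f qs q \<in> trans A'" using norm_F.prems(2) by simp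
  ultimately show ?case by (intro run_F)
next
  case (norm_O q qs ts Ns g)
  have "\<forall>i<length ts. run D A' (ts!i) (qs!i)"
  proof (intro allI impI)
    fix i assume i: "i < length ts"
    have "Ns!i \<in> set Ns" using i norm_O.hyps(3) by simp
    then have "Ns!i \<subseteq> trans A'" using norm_O.prems(2) by blast
    then show "run D A' (ts!i) (qs!i)" using norm_O.IH i norm_O.prems(1) by blast
  qed
  then have "list_all2 (run D A') ts qs" using norm_O.hyps(2) by (simp add: list_all2_conv_all_nth)
  moreover have "TO g qs q \<in> trans A'" using norm_O.prems(2) by simp
  ultimately show ?case by (intro run_O)
qed


lemma ctx_noninterp: "ctx_rep u v s s' \<Longrightarrow> \<not> interp u \<Longrightarrow> \<not> interp s"
  by (induction rule: ctx_rep.induct) auto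

lemma Erel_mono: "trans A \<subseteq> trans A' \<Longrightarrow> (q0,q) \<in> (Erel A)\<^sup>* \<Longrightarrow> (q0,q) \<in> (Erel A')\<^sup>*"
  by (metis (no_types, lifting) Erel_def case_prodD case_prodI mem_Collect_eq rtrancl_mono subrelI subsetD)

lemma ctx_lemma:
  assumes "ctx_rep u v s s'" "\<not> interp u" "trans A \<subseteq> trans A'"
    and H: "\<And>bu q. ap D u bu \<Longrightarrow> run D A bu q \<Longrightarrow> \<exists>bv. ap D v bv \<and> run D A' bv q"
  shows "ap D s b \<Longrightarrow> run D A b q \<Longrightarrow> \<exists>b'. ap D s' b' \<and> run D A' b' q"
  using assms(1)
proof (induction arbitrary: b q rule: ctx_rep.induct)
  case ctx_root
  then show ?case using H by blast
next
  case (ctx_F i ts t' f)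
  from ctx_F.prems(1) obtain bs where b: "b = Fn f bs" "list_all2 (ap D) ts bs"
    by (cases rule: ap.cases) auto
  obtain qs q0 where r: "TF f qs q0 \<in> trans A" "list_all2 (run D A) bs qs" "(q0, q) \<in> (Erel A)\<^sup>*"
    using run_Fn_inv[OF ctx_F.prems(2)[unfolded b(1)]] by blast
  have len: "length ts = length bs" "length bs = length qs" using b r list_all2_lengthD by blast+
  obtain b'' where b'': "ap D t' b''" "run D A' b'' (qs!i)"
    using ctx_F.IH[of "bs!i" "qs!i"] b r ctx_F.hyps(1) len by (auto simp: list_all2_conv_all_nth)
  have l1: "list_all2 (ap D) (ts[i:=t']) (bs[i:=b''])"
    using b(2) b''(1) by (simp add: list_all2_update_cong)
  have l2: "list_all2 (run D A') bs qs" using r(2) by (rule list_all2_mono) (rule run_mono[OF _ assms(3)])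
  have l3: "list_all2 (run D A') (bs[i:=b'']) qs"
    using list_all2_update_cong[OF l2 b''(2), of i] by simp
  have "run D A' (Fn f (bs[i:=b''])) q0" using r(1) assms(3) l3 by (auto intro: run_F)
  then have "run D A' (Fn f (bs[i:=b''])) q" by (rule run_Echain[OF Erel_mono[OF assms(3) r(3)]])
  then show ?case using l1 by (auto intro: ap_F)
next
  case (ctx_O i ts t' g)
  have ni: "\<not> interp (Op g ts)" using ctx_noninterp[OF ctx_rep.ctx_O[OF ctx_O.hyps] assms(2)] .
  from ctx_O.prems(1) obtain bs where b: "b = Op (AOp g) bs" "list_all2 (ap D) ts bs"
    using ni by (cases rule: ap.cases) auto
  have nb: "\<not> interp b" using ap_noninterp ctx_O.prems(1) ni by blast
  obtain qs q0 where r: "TO (AOp g) qs q0 \<in> trans A" "list_all2 (run D A) bs qs" "(q0, q) \<in> (Erel A)\<^sup>*"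
    using run_Op_inv[OF ctx_O.prems(2)[unfolded b(1)]] nb b by blast
  have len: "length ts = length bs" "length bs = length qs" using b r list_all2_lengthD by blast+
  obtain b'' where b'': "ap D t' b''" "run D A' b'' (qs!i)"
    using ctx_O.IH[of "bs!i" "qs!i"] b r ctx_O.hyps(1) len by (auto simp: list_all2_conv_all_nth)
  have l1: "list_all2 (ap D) (ts[i:=t']) (bs[i:=b''])"
    using b(2) b''(1) by (simp add: list_all2_update_cong)
  have l2: "list_all2 (run D A') bs qs" using r(2) by (rule list_all2_mono) (rule run_mono[OF _ assms(3)])
  have l3: "list_all2 (run D A') (bs[i:=b'']) qs"
    using list_all2_update_cong[OF l2 b''(2), of i] by simp
  have "run D A' (Op (AOp g) (bs[i:=b''])) q0" using r(1) assms(3) l3 by (auto intro: run_O)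
  then have "run D A' (Op (AOp g) (bs[i:=b''])) q" by (rule run_Echain[OF Erel_mono[OF assms(3) r(3)]])
  then show ?case using l1 by (auto intro: ap_O)
qed



lemma match_dec:
  "passive_trm l \<Longrightarrow> linear l \<Longrightarrow> ap D (subst \<sigma> l) b \<Longrightarrow> run D A b q \<Longrightarrow>
   \<exists>\<tau> bx. run D A (absT D (V \<circ> \<tau>) l) q \<and> (\<forall>x\<in>vars l. ap D (\<sigma> x) (bx x) \<and> run D A (bx x) (\<tau> x))"
proof (induction l arbitrary: b q)
  case (V x)
  show ?case
    by (rule exI[of _ "\<lambda>_. q"], rule exI[of _ "\<lambda>_. b"]) (use V in \<open>auto intro: run_V\<close>)
next
  case (Fn f ls)
  from Fn.prems(3) obtain bs where b: "b = Fn f bs" "list_all2 (ap D) (map (subst \<sigma>) ls) bs"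
    by (cases rule: ap.cases) auto
  obtain qs q0 where r: "TF f qs q0 \<in> trans A" "list_all2 (run D A) bs qs" "(q0, q) \<in> (Erel A)\<^sup>*"
    using run_Fn_inv[OF Fn.prems(4)[unfolded b(1)]] by blast
  have len: "length ls = length bs" "length bs = length qs" using b r list_all2_lengthD by fastforce+
  let ?P = "\<lambda>i \<tau> bx. run D A (absT D (V \<circ> \<tau>) (ls!i)) (qs!i) \<and> (\<forall>x\<in>vars (ls!i). ap D (\<sigma> x) (bx x) \<and> run D A (bx x) (\<tau> x))"
  have "\<forall>i. \<exists>p. i < length ls \<longrightarrow> ?P i (fst p) (snd p)"
  proof
    fix i
    show "\<exists>p. i < length ls \<longrightarrow> ?P i (fst p) (snd p)"
    proof (cases "i < length ls")
      case True
      have p1: "ls!i \<in> set ls" using True by simp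
      have p2: "passive_trm (ls!i)" "linear (ls!i)" using Fn.prems(1,2) p1 by auto
      have p3: "ap D (subst \<sigma> (ls!i)) (bs!i)" using list_all2_nthD[OF b(2)] True by simp
      have p4: "run D A (bs!i) (qs!i)" using list_all2_nthD[OF r(2)] True len by simp
      have "\<exists>\<tau> bx. ?P i \<tau> bx"
        using Fn.IH[OF p1 p2 p3 p4] by blast
      then show ?thesis by auto
    qed auto
  qed
  then obtain F where F: "\<And>i. i < length ls \<Longrightarrow> ?P i (fst (F i)) (snd (F i))" by metis
  define idx where "idx x = (SOME i. i < length ls \<and> x \<in> vars (ls!i))" for x
  have idx: "idx x = i" if "i < length ls" "x \<in> vars (ls!i)" for x i
  proof -
    have "\<forall>j. j < length ls \<and> x \<in> vars (ls!j) \<longrightarrow> j = i"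
    proof (intro allI impI)
      fix j assume j: "j < length ls \<and> x \<in> vars (ls!j)"
      show "j = i"
      proof (rule ccontr)
        assume "j \<noteq> i"
        then have "j < i \<or> i < j" by auto
        then show False using Fn.prems(2) j that by auto
      qed
    qed
    then show ?thesis unfolding idx_def using that by (metis (mono_tags, lifting) someI)
  qed
  define \<tau> where "\<tau> x = fst (F (idx x)) x" for x
  define bx where "bx x = snd (F (idx x)) x" for x
  have ri: "run D A (absT D (V \<circ> \<tau>) (ls!i)) (qs!i)" if "i < length ls" for i
  proof -
    have "absT D (V \<circ> \<tau>) (ls!i) = absT D (V \<circ> fst (F i)) (ls!i)"
      by (rule absT_cong) (simp add: \<tau>_def idx[OF that])
    then show ?thesis using F[OF that] by simp
  qed
  have "list_all2 (run D A) (map (absT D (V \<circ> \<tau>)) ls) qs"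
    using ri len by (auto simp: list_all2_conv_all_nth)
  then have "run D A (absT D (V \<circ> \<tau>) (Fn f ls)) q0" using r(1) by (auto intro: run_F)
  then have R: "run D A (absT D (V \<circ> \<tau>) (Fn f ls)) q" by (rule run_Echain[OF r(3)])
  have "\<forall>x\<in>vars (Fn f ls). ap D (\<sigma> x) (bx x) \<and> run D A (bx x) (\<tau> x)"
  proof
    fix x assume "x \<in> vars (Fn f ls)"
    then obtain i where i: "i < length ls" "x \<in> vars (ls!i)" by (auto simp: in_set_conv_nth)
    show "ap D (\<sigma> x) (bx x) \<and> run D A (bx x) (\<tau> x)"
      using F[OF i(1)] i(2) by (simp add: bx_def \<tau>_def idx[OF i])
  qed
  then show ?case using R by blast
qed auto



lemma vars_subF: "i < length rs \<Longrightarrow> x \<in> vars (rs!i) \<Longrightarrow> x \<in> vars (Fn f rs)"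
  using nth_mem by fastforce

lemma vars_subO: "i < length rs \<Longrightarrow> x \<in> vars (rs!i) \<Longrightarrow> x \<in> vars (Op g rs)"
  using nth_mem by fastforce

lemma tle_Fn_inv: "tle D (Fn f ss) b \<Longrightarrow> \<exists>ss'. b = Fn f ss' \<and> list_all2 (tle D) ss ss'"
  by (cases rule: tle.cases) auto

lemma tle_Op_inv: "tle D (Op g ss) b \<Longrightarrow> \<not> interp (Op g ss) \<Longrightarrow> \<exists>ss'. b = Op g ss' \<and> list_all2 (tle D) ss ss'"
  by (cases rule: tle.cases) auto

lemma tle_Op_inv2: "tle D (Op g ss) b \<Longrightarrow> (interp (Op g ss) \<and> interp b \<and> aeval D (Op g ss) \<le> aeval D b) \<or> (\<exists>ss'. b = Op g ss' \<and> list_all2 (tle D) ss ss')"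
  by (cases rule: tle.cases) auto

lemma TV: "tle D (absT D \<phi> r) (absT D \<psi> r) \<Longrightarrow> x \<in> vars r \<Longrightarrow> \<phi> x = V p \<Longrightarrow> \<psi> x = V p"
proof (induction r)
  case (V y)
  then have "tle D (V p) (\<psi> x)" by simp
  then show ?case by (rule tle_V_inv)
next
  case (Fn f rs)
  obtain i where i: "i < length rs" "x \<in> vars (rs!i)" using Fn.prems(2) by (auto simp: in_set_conv_nth)
  obtain ss' where "Fn f (map (absT D \<psi>) rs) = Fn f ss'" "list_all2 (tle D) (map (absT D \<phi>) rs) ss'"
    using tle_Fn_inv[of D f "map (absT D \<phi>) rs" "absT D \<psi> (Fn f rs)"] Fn.prems(1) by auto
  then have "list_all2 (tle D) (map (absT D \<phi>) rs) (map (absT D \<psi>) rs)" by simp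
  then have "tle D (absT D \<phi> (rs!i)) (absT D \<psi> (rs!i))" using list_all2_nthD[of _ _ _ i] i(1) by fastforce
  then show ?case using Fn.IH[OF nth_mem[OF i(1)] _ i(2) Fn.prems(3)] by blast
next
  case (Op g rs)
  obtain i where i: "i < length rs" "x \<in> vars (rs!i)" using Op.prems(2) by (auto simp: in_set_conv_nth)
  have ni: "\<not> interp (absT D \<phi> (Op g rs))"
  proof
    assume "interp (absT D \<phi> (Op g rs))"
    from interp_absT_vars[OF this Op.prems(2)] show False using Op.prems(3) by simp
  qed
  obtain ss' where "Op (AOp g) (map (absT D \<psi>) rs) = Op (AOp g) ss'" "list_all2 (tle D) (map (absT D \<phi>) rs) ss'"
    using tle_Op_inv[of D "AOp g" "map (absT D \<phi>) rs" "absT D \<psi> (Op g rs)"] Op.prems(1) ni by auto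
  then have "list_all2 (tle D) (map (absT D \<phi>) rs) (map (absT D \<psi>) rs)" by simp
  then have "tle D (absT D \<phi> (rs!i)) (absT D \<psi> (rs!i))" using list_all2_nthD[of _ _ _ i] i(1) by fastforce
  then show ?case using Op.IH[OF nth_mem[OF i(1)] _ i(2) Op.prems(3)] by blast
next
  case (Cn c) then show ?case by simp
qed

lemma APR:
  assumes vd: "valid_dom D"
    and hC: "\<And>x. x \<in> vars r \<Longrightarrow> x \<in> C \<Longrightarrow> interp (\<sigma> x) \<and> (\<exists>lx. \<sigma>' x = Cn lx \<and> alpha D (cval (ceval D (\<sigma> x))) \<le> lx)"
    and hN: "\<And>x. x \<in> vars r \<Longrightarrow> x \<notin> C \<Longrightarrow> \<sigma>' x = V (\<tau> x) \<and> ap D (\<sigma> x) (bx x)"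
  shows "tle D (absT D \<sigma>' r) (absT D \<sigma>'' r) \<Longrightarrow>
      ap D (subst \<sigma> r) (absT D (\<lambda>x. if x \<in> C then \<sigma>'' x else bx x) r)"
  using hC hN
proof (induction r)
  case (V x)
  show ?case
  proof (cases "x \<in> C")
    case True
    then obtain lx where "\<sigma>' x = Cn lx" "alpha D (cval (ceval D (\<sigma> x))) \<le> lx" "interp (\<sigma> x)" using V by auto
    moreover then have "interp (\<sigma>'' x) \<and> lx \<le> aeval D (\<sigma>'' x)" using tle_Cn_inv V.prems(1) by fastforce
    ultimately show ?thesis using True by (auto intro!: ap_I)
  next
    case False then show ?thesis using V by auto
  qed
next
  case (Cn d) then show ?case by (auto intro!: ap_I)
next
  case (Fn f rs)
  have "list_all2 (tle D) (map (absT D \<sigma>') rs) (map (absT D \<sigma>'') rs)"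
    using tle_Fn_inv[OF Fn.prems(1)[simplified]] by auto
  then have lt: "\<forall>i<length rs. tle D (absT D \<sigma>' (rs!i)) (absT D \<sigma>'' (rs!i))"
    by (simp add: list_all2_conv_all_nth)
  have "ap D (subst \<sigma> (rs!i)) (absT D (\<lambda>x. if x \<in> C then \<sigma>'' x else bx x) (rs!i))" if i: "i < length rs" for i
  proof (rule Fn.IH)
    show "rs!i \<in> set rs" using i by simp
    show "tle D (absT D \<sigma>' (rs!i)) (absT D \<sigma>'' (rs!i))" using lt i by simp
    show "\<And>x. x \<in> vars (rs!i) \<Longrightarrow> x \<in> C \<Longrightarrow> interp (\<sigma> x) \<and> (\<exists>lx. \<sigma>' x = Cn lx \<and> alpha D (cval (ceval D (\<sigma> x))) \<le> lx)"
      using Fn.prems(2) vars_subF[OF i] by blast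
    show "\<And>x. x \<in> vars (rs!i) \<Longrightarrow> x \<notin> C \<Longrightarrow> \<sigma>' x = V (\<tau> x) \<and> ap D (\<sigma> x) (bx x)"
      using Fn.prems(3) vars_subF[OF i] by blast
  qed
  then show ?case by (auto intro!: ap_F simp: list_all2_conv_all_nth)
next
  case (Op g rs)
  let ?b = "\<lambda>x. if x \<in> C then \<sigma>'' x else bx x"
  have "(interp (absT D \<sigma>' (Op g rs)) \<and> interp (absT D \<sigma>'' (Op g rs)) \<and> aeval D (absT D \<sigma>' (Op g rs)) \<le> aeval D (absT D \<sigma>'' (Op g rs)))
     \<or> (\<exists>ss'. absT D \<sigma>'' (Op g rs) = Op (AOp g) ss' \<and> list_all2 (tle D) (map (absT D \<sigma>') rs) ss')"
    using tle_Op_inv2[of D "AOp g" "map (absT D \<sigma>') rs" "absT D \<sigma>'' (Op g rs)"] Op.prems(1) by simp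
  then show ?case
  proof
    assume tle_interp: "interp (absT D \<sigma>' (Op g rs)) \<and> interp (absT D \<sigma>'' (Op g rs)) \<and> aeval D (absT D \<sigma>' (Op g rs)) \<le> aeval D (absT D \<sigma>'' (Op g rs))"
    have inC: "x \<in> C" if "x \<in> vars (Op g rs)" for x
    proof (rule ccontr)
      assume "x \<notin> C"
      then have "\<sigma>' x = V (\<tau> x)" using Op.prems(3) that by blast
      moreover have "interp (\<sigma>' x)" using interp_absT_vars[OF tle_interp[THEN conjunct1] that] by blast
      ultimately show False by simp
    qed
    have eq: "absT D ?b (Op g rs) = absT D \<sigma>'' (Op g rs)"
      by (rule absT_cong) (simp add: inC)
    have hyp: "\<forall>x\<in>vars (Op g rs). interp (\<sigma> x) \<and> alpha D (cval (ceval D (\<sigma> x))) \<le> aeval D (\<sigma>' x)"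
      using Op.prems(2) inC by fastforce
    have i1: "interp (subst \<sigma> (Op g rs))" using interp_absT_subst[OF tle_interp[THEN conjunct1]] hyp by blast
    have "alpha D (cval (ceval D (subst \<sigma> (Op g rs)))) \<le> aeval D (absT D \<sigma>' (Op g rs))"
      using M[OF vd tle_interp[THEN conjunct1] hyp] .
    then show ?thesis unfolding eq using tle_interp i1 by (auto intro!: ap_I)
  next
    assume "\<exists>ss'. absT D \<sigma>'' (Op g rs) = Op (AOp g) ss' \<and> list_all2 (tle D) (map (absT D \<sigma>') rs) ss'"
    then have lt: "\<forall>i<length rs. tle D (absT D \<sigma>' (rs!i)) (absT D \<sigma>'' (rs!i))"
      by (simp add: list_all2_conv_all_nth)
    have "ap D (subst \<sigma> (rs!i)) (absT D ?b (rs!i))" if i: "i < length rs" for i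
    proof (rule Op.IH)
      show "rs!i \<in> set rs" using i by simp
      show "tle D (absT D \<sigma>' (rs!i)) (absT D \<sigma>'' (rs!i))" using lt i by simp
      show "\<And>x. x \<in> vars (rs!i) \<Longrightarrow> x \<in> C \<Longrightarrow> interp (\<sigma> x) \<and> (\<exists>lx. \<sigma>' x = Cn lx \<and> alpha D (cval (ceval D (\<sigma> x))) \<le> lx)"
        using Op.prems(2) vars_subO[OF i] by blast
      show "\<And>x. x \<in> vars (rs!i) \<Longrightarrow> x \<notin> C \<Longrightarrow> \<sigma>' x = V (\<tau> x) \<and> ap D (\<sigma> x) (bx x)"
        using Op.prems(3) vars_subO[OF i] by blast
    qed
    then show ?thesis by (auto intro!: ap_O simp: list_all2_conv_all_nth)
  qed
qed



lemma cstep_trans: "cstep D R Solve A0 A1 \<Longrightarrow> trans A0 \<subseteq> trans A1"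
  unfolding cstep_def by auto

lemma cstep_finals: "cstep D R Solve A0 A1 \<Longrightarrow> finals A1 = finals A0"
  unfolding cstep_def by auto

lemma root_lemma:
  fixes D :: "('d,'o,'l::complete_lattice) absdom"
    and R :: "('f,'o,'d,'v) crule set"
    and Solve :: "('f,'o,'d,'l,'q,'v) solver"
    and A0 A1 :: "('f,'o,'l,'q) lta"
    and \<sigma> :: "'v \<Rightarrow> ('f,'o,'d,'v) trm"
  assumes vd: "valid_dom D" and ss: "sound_solver D Solve" and ct: "ctrs R" and ll: "left_linear R"
    and cl: "closed A0" and cst: "cstep D R Solve A0 A1"
    and rl: "(l,r,cs) \<in> R" and gr: "\<forall>x. ground (\<sigma> x)" and ch: "conds_hold D \<sigma> cs"
    and apl: "ap D (subst \<sigma> l) b" and rb: "run D A0 b q"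
  shows "\<exists>bv. ap D (subst \<sigma> r) bv \<and> run D A1 bv q"
proof -
  have lnv: "\<forall>x. l \<noteq> V x" and pl: "passive_trm l" and vr: "vars r \<subseteq> vars l"
    and cvs: "\<And>c t. c \<in> set cs \<Longrightarrow> t \<in> set (snd c) \<Longrightarrow> nopassive_trm t \<and> vars t \<subseteq> vars l"
    using ct rl unfolding ctrs_def by fastforce+
  have lin: "linear l" using ll rl unfolding left_linear_def by fastforce
  have cvl: "cvars cs \<subseteq> vars l" using cvs unfolding cvars_def by fastforce
  obtain f ls where lF: "l = Fn f ls" using lnv pl by (cases l) auto
  from apl obtain bs where bF: "b = Fn f bs" unfolding lF by (cases rule: ap.cases) auto
  have qS: "q \<in> states A0" using run_target_states[OF rb cl] bF by auto
  obtain \<tau> bx where m: "run D A0 (absT D (V \<circ> \<tau>) l) q"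
    and mx: "\<And>x. x \<in> vars l \<Longrightarrow> ap D (\<sigma> x) (bx x) \<and> run D A0 (bx x) (\<tau> x)"
    using match_dec[OF pl lin apl rb] by blast
  have tau: "\<tau> \<in> matching D A0 l q" unfolding matching_def using m by simp
  define \<theta> where "\<theta> = ceval D \<circ> \<sigma>"
  have g\<theta>: "\<forall>x. ground (\<theta> x)" using gr vars_ceval unfolding \<theta>_def ground_def by (metis comp_apply subset_empty)
  have l\<theta>: "\<forall>x\<in>cvars cs. \<theta> x \<in> lang D A0 (\<tau> x)"
  proof
    fix x assume "x \<in> cvars cs"
    then have x: "x \<in> vars l" using cvl by blast
    have "tle D (absT D (\<lambda>_. undefined) (ceval D (\<sigma> x))) (bx x)"
      using ap_tle[OF vd] mx[OF x] by blast
    then show "\<theta> x \<in> lang D A0 (\<tau> x)" unfolding lang_def using g\<theta> mx[OF x] by (auto simp: \<theta>_def)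
  qed
  have c\<theta>: "conds_hold D \<theta> cs"
    using ch unfolding conds_hold_def cond_holds_def \<theta>_def by (simp add: ceval_subst_ceval)
  have ssd: "(\<forall>\<sigma>'\<in>Solve \<tau> A0 cs. \<forall>x. if x \<in> cvars cs then (\<exists>l. \<sigma>' x = Cn l) else \<sigma>' x = V (\<tau> x))"
    "(\<forall>\<sigma>'\<in>Solve \<tau> A0 cs. True)"
    using ss unfolding sound_solver_def by blast+
  obtain \<sigma>' where s': "\<sigma>' \<in> Solve \<tau> A0 cs"
    and s'c: "\<And>x. x \<in> cvars cs \<Longrightarrow> \<exists>lx. \<sigma>' x = Cn lx \<and> alpha D (cval (ceval D (\<theta> x))) \<le> lx"
  proof -
    have sd: "\<forall>\<theta> :: 'v \<Rightarrow> ('f,'o,'d,'v) trm. (\<forall>x. ground (\<theta> x)) \<and> (\<forall>x\<in>cvars cs. \<theta> x \<in> lang D A0 (\<tau> x)) \<and> conds_hold D \<theta> cs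
        \<longrightarrow> (\<exists>\<sigma>'\<in>Solve \<tau> A0 cs. \<forall>x\<in>cvars cs. \<exists>l. \<sigma>' x = Cn l \<and> alpha D (cval (ceval D (\<theta> x))) \<le> l)"
      using ss unfolding sound_solver_def by blast
    have "\<exists>\<sigma>'\<in>Solve \<tau> A0 cs. \<forall>x\<in>cvars cs. \<exists>l. \<sigma>' x = Cn l \<and> alpha D (cval (ceval D (\<theta> x))) \<le> l"
      using sd g\<theta> l\<theta> c\<theta> by blast
    then show ?thesis using that by blast
  qed
  have s'n: "\<And>x. x \<notin> cvars cs \<Longrightarrow> \<sigma>' x = V (\<tau> x)" using ssd(1) s' by (metis (full_types))
  obtain \<sigma>'' where t'': "tle D (absT D \<sigma>' r) (absT D \<sigma>'' r)" and r'': "run D A1 (absT D \<sigma>'' r) q"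
  proof (cases "\<exists>\<sigma>''. tle D (absT D \<sigma>' r) (absT D \<sigma>'' r) \<and> run D A0 (absT D \<sigma>'' r) q")
    case True
    then obtain \<sigma>2 where h: "tle D (absT D \<sigma>' r) (absT D \<sigma>2 r)" "run D A0 (absT D \<sigma>2 r) q" by blast
    show ?thesis using that[OF h(1) run_mono[OF h(2) cstep_trans[OF cst]]] .
  next
    case False
    have "\<sigma>' \<in> {\<sigma>'. \<exists>\<sigma>\<in>matching D A0 l q. \<sigma>' \<in> Solve \<sigma> A0 cs \<and>
        \<not> (\<exists>\<sigma>''. tle D (absT D \<sigma>' r) (absT D \<sigma>'' r) \<and> run D A0 (absT D \<sigma>'' r) q)}"
      using tau s' False by blast
    then have om: "\<sigma>' \<in> omega D Solve A0 (l,r,cs) q" unfolding omega_def by simp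
    have j: "((l,r,cs), q, absT D \<sigma>' r) \<in> cpairs D R Solve A0"
      unfolding cpairs_def mem_Collect_eq prod.case fst_conv snd_conv using rl qS om by blast
    obtain qn Ns where cs1: "\<forall>j\<in>cpairs D R Solve A0. qn j \<notin> states A0 \<and> norm D A0 (snd (snd j)) (qn j) (Ns j)"
      and A1: "A1 = \<lparr>states = states A0 \<union> (\<Union>j\<in>cpairs D R Solve A0. insert (qn j) (\<Union>(tr_states ` Ns j))),
           finals = finals A0,
           trans = trans A0 \<union> (\<Union>j\<in>cpairs D R Solve A0. insert (TE (qn j) (fst (snd j))) (Ns j))\<rparr>"
      using cst unfolding cstep_def by blast
    let ?j = "((l,r,cs), q, absT D \<sigma>' r)"
    have tA1: "trans A1 = trans A0 \<union> (\<Union>j\<in>cpairs D R Solve A0. insert (TE (qn j) (fst (snd j))) (Ns j))"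
      by (subst A1) simp
    have nm: "norm D A0 (absT D \<sigma>' r) (qn ?j) (Ns ?j)" using cs1 j by fastforce
    have s1: "insert (TE (qn ?j) (fst (snd ?j))) (Ns ?j) \<subseteq> trans A1" unfolding tA1 using j by blast
    then have s2: "Ns ?j \<subseteq> trans A1" "TE (qn ?j) q \<in> trans A1" by simp_all
    have "run D A1 (absT D \<sigma>' r) (qn ?j)" using norm_run[OF nm cstep_trans[OF cst] s2(1)] .
    then have "run D A1 (absT D \<sigma>' r) q" using s2(2) by (rule run_E)
    then show ?thesis using that tle_refl by blast
  qed
  define \<sigma>b where "\<sigma>b = (\<lambda>x. if x \<in> cvars cs then \<sigma>'' x else bx x)"
  have ic: "interp (\<sigma> x)" if xc: "x \<in> cvars cs" for x
  proof -
    obtain c t where ct: "c \<in> set cs" "t \<in> set (snd c)" "x \<in> vars t" using xc unfolding cvars_def by blast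
    have "is_C (ceval D (subst \<sigma> t))" using ch ct unfolding conds_hold_def cond_holds_def by blast
    then have "is_C (ceval D (\<sigma> x))" by (rule isC_var[OF conjunct1[OF cvs[OF ct(1,2)]] ct(3)])
    then show ?thesis by (rule isC_interp[OF gr[rule_format]])
  qed
  have apr: "ap D (subst \<sigma> r) (absT D \<sigma>b r)"
    unfolding \<sigma>b_def
  proof (rule APR[OF vd _ _ t''])
    fix x assume "x \<in> vars r" "x \<in> cvars cs"
    then show "interp (\<sigma> x) \<and> (\<exists>lx. \<sigma>' x = Cn lx \<and> alpha D (cval (ceval D (\<sigma> x))) \<le> lx)"
      using ic s'c by (simp add: \<theta>_def ceval_idem)
  next
    fix x assume "x \<in> vars r" "x \<notin> cvars cs"
    then show "\<sigma>' x = V (\<tau> x) \<and> ap D (\<sigma> x) (bx x)" using s'n[of x] mx[of x] vr by blast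
  qed
  have "run D A1 (absT D \<sigma>b r) q"
  proof (rule run_plug[OF r''])
    show "\<forall>x\<in>vars r. \<sigma>'' x = \<sigma>b x \<or> (\<exists>p. \<sigma>'' x = V p \<and> run D A1 (\<sigma>b x) p)"
    proof
      fix x assume x: "x \<in> vars r"
      show "\<sigma>'' x = \<sigma>b x \<or> (\<exists>p. \<sigma>'' x = V p \<and> run D A1 (\<sigma>b x) p)"
      proof (cases "x \<in> cvars cs")
        case True then show ?thesis by (simp add: \<sigma>b_def)
      next
        case False
        have "\<sigma>'' x = V (\<tau> x)" using TV[OF t'' x s'n[OF False]] .
        moreover have "run D A1 (bx x) (\<tau> x)" using run_mono[OF conjunct2[OF mx[OF subsetD[OF vr x]]] cstep_trans[OF cst]] .
        ultimately show ?thesis using False by (simp add: \<sigma>b_def)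
      qed
    qed
  qed
  then show ?thesis using apr by blast
qed



lemma run_rename: "run D A t q \<Longrightarrow> ground t \<Longrightarrow>
   run D (rename q1 q2 A) t ((\<lambda>x. if x = q1 then q2 else x) q)"
proof (induction rule: run.induct)
  case (run_V q) then show ?case by (simp add: ground_def)
next
  case (run_E t qa qb)
  have "TE ((\<lambda>x. if x = q1 then q2 else x) qa) ((\<lambda>x. if x = q1 then q2 else x) qb) \<in> trans (rename q1 q2 A)"
    using run_E(2) unfolding rename_def Let_def by (force intro: image_eqI[where x="TE qa qb"])
  with run_E.IH[OF run_E.prems] show ?case by (rule run.run_E)
next
  case (run_F f qs q ts)
  have "TF f (map (\<lambda>x. if x = q1 then q2 else x) qs) ((\<lambda>x. if x = q1 then q2 else x) q) \<in> trans (rename q1 q2 A)"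
    using run_F(1) unfolding rename_def Let_def by (force intro: image_eqI[where x="TF f qs q"])
  moreover have "list_all2 (run D (rename q1 q2 A)) ts (map (\<lambda>x. if x = q1 then q2 else x) qs)"
    using run_F(2,3) by (auto simp: list_all2_conv_all_nth ground_def)
  ultimately show ?case by (rule run.run_F)
next
  case (run_O g qs q ts)
  have "TO g (map (\<lambda>x. if x = q1 then q2 else x) qs) ((\<lambda>x. if x = q1 then q2 else x) q) \<in> trans (rename q1 q2 A)"
    using run_O(1) unfolding rename_def Let_def by (force intro: image_eqI[where x="TO g qs q"])
  moreover have "list_all2 (run D (rename q1 q2 A)) ts (map (\<lambda>x. if x = q1 then q2 else x) qs)"
    using run_O(2,3) by (auto simp: list_all2_conv_all_nth ground_def)
  ultimately show ?case by (rule run.run_O)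
next
  case (run_L l q u)
  have "TL l ((\<lambda>x. if x = q1 then q2 else x) q) \<in> trans (rename q1 q2 A)"
    using run_L(1) unfolding rename_def Let_def by (force intro: image_eqI[where x="TL l q"])
  then show ?case using run_L by (auto intro: run.run_L)
qed

definition simmap :: "('d,'o,'l::complete_lattice) absdom \<Rightarrow> ('f,'o,'l,'q) lta \<Rightarrow> ('f,'o,'l,'q) lta \<Rightarrow> ('q \<Rightarrow> 'q) \<Rightarrow> bool" where
  "simmap D A A' h \<longleftrightarrow> (\<forall>t q. ground t \<longrightarrow> run D A t q \<longrightarrow> run D A' t (h q)) \<and> finals A' = h ` finals A"

lemma simmap_id: "trans A \<subseteq> trans A' \<Longrightarrow> finals A' = finals A \<Longrightarrow> simmap D A A' id"
  unfolding simmap_def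
proof (intro conjI allI impI)
  fix t q assume "trans A \<subseteq> trans A'" "run D A t q"
  then show "run D A' t (id q)" using run_mono[of D A t q A'] by simp
qed simp

lemma simmap_comp: "simmap D A B h \<Longrightarrow> simmap D B C g \<Longrightarrow> simmap D A C (g \<circ> h)"
  unfolding simmap_def by (simp add: image_comp)

lemma tr_states_ren: "tr_states (ren_tr h t) = h ` tr_states t"
  by (cases t) auto

lemma closed_ren: "closed A \<Longrightarrow> closed \<lparr>states = h ` states A, finals = h ` finals A, trans = ren_tr h ` trans A\<rparr>"
  unfolding closed_def by (auto simp only: lta.simps tr_states_ren) blast

lemma closed_rename: "closed A \<Longrightarrow> closed (rename q1 q2 A)"
  unfolding rename_def Let_def by (rule closed_ren)

lemma merge_step_sim: "merge_step D E A A' \<Longrightarrow> (\<exists>h. simmap D A A' h) \<and> (closed A \<longrightarrow> closed A')"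
proof -
  assume "merge_step D E A A'"
  then obtain q1 q2 where "A' = rename q2 q1 A \<or> A' = rename q1 q2 A" unfolding merge_step_def by blast
  moreover have sm: "simmap D A (rename a c A) (\<lambda>x. if x = a then c else x)" for a c
  proof -
    have "finals (rename a c A) = (\<lambda>x. if x = a then c else x) ` finals A" by (simp add: rename_def Let_def)
    moreover have "\<forall>t q. ground t \<longrightarrow> run D A t q \<longrightarrow> run D (rename a c A) t ((\<lambda>x. if x = a then c else x) q)"
    proof (intro allI impI)
      fix t q assume "ground t" "run D A t q"
      then show "run D (rename a c A) t ((\<lambda>x. if x = a then c else x) q)" using run_rename[of D A t q a c] by simp
    qed
    ultimately show ?thesis unfolding simmap_def by blast
  qed
  ultimately show ?thesis
  proof (elim disjE)
    assume "A' = rename q2 q1 A" then show ?thesis using sm[of q2 q1] closed_rename[of A q2 q1] by blast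
  next
    assume "A' = rename q1 q2 A" then show ?thesis using sm[of q1 q2] closed_rename[of A q1 q2] by blast
  qed
qed

lemma merge_star_sim: "(merge_step D E)\<^sup>*\<^sup>* A A' \<Longrightarrow> (\<exists>h. simmap D A A' h) \<and> (closed A \<longrightarrow> closed A')"
proof (induction rule: rtranclp_induct)
  case base then show ?case using simmap_id[of A A D] by blast
next
  case (step y z)
  then show ?case using merge_step_sim[OF step(2)] simmap_comp by blast
qed

lemma eval_auto_closed:
  assumes ea: "eval_auto D A A'" and cl: "closed A" shows "closed A'"
  unfolding closed_def
proof
  fix t assume t: "t \<in> trans A'"
  have st: "states A' = states A" using ea unfolding eval_auto_def by blast
  show "tr_states t \<subseteq> states A'"
  proof (cases "t \<in> trans A")
    case True then show ?thesis using cl st unfolding closed_def by blast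
  next
    case False
    then obtain l q g qs where tl: "t = TL l q" "TO g qs q \<in> trans A'"
      using ea t unfolding eval_auto_def by blast
    have "TO g qs q \<in> trans A"
    proof (rule ccontr)
      assume "TO g qs q \<notin> trans A"
      then obtain l' q' where "TO g qs q = TL l' q'" using ea tl(2) unfolding eval_auto_def by blast
      then show False by simp
    qed
    then have "q \<in> states A" using cl unfolding closed_def by fastforce
    then show ?thesis using tl st by simp
  qed
qed

lemma cstep_closed:
  assumes cs: "cstep D R Solve A A'" and cl: "closed A" shows "closed A'"
proof -
  obtain qn Ns where A1: "A' = \<lparr>states = states A \<union> (\<Union>j\<in>cpairs D R Solve A. insert (qn j) (\<Union>(tr_states ` Ns j))),
           finals = finals A,
           trans = trans A \<union> (\<Union>j\<in>cpairs D R Solve A. insert (TE (qn j) (fst (snd j))) (Ns j))\<rparr>"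
    using cs unfolding cstep_def by blast
  have qs: "fst (snd j) \<in> states A" if "j \<in> cpairs D R Solve A" for j
    using that unfolding cpairs_def by auto
  show ?thesis unfolding closed_def
  proof
    fix t assume "t \<in> trans A'"
    then have "t \<in> trans A \<or> (\<exists>j\<in>cpairs D R Solve A. t = TE (qn j) (fst (snd j)) \<or> t \<in> Ns j)"
      unfolding A1 by simp
    then show "tr_states t \<subseteq> states A'"
    proof (elim disjE bexE)
      assume "t \<in> trans A" then show ?thesis using cl unfolding closed_def A1 by auto
    next
      fix j assume j: "j \<in> cpairs D R Solve A" and "t = TE (qn j) (fst (snd j))"
      then show ?thesis using qs[OF j] unfolding A1 by auto
    next
      fix j assume j: "j \<in> cpairs D R Solve A" and "t \<in> Ns j"
      then show ?thesis unfolding A1 by auto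
    qed
  qed
qed

lemma comp_step_sim: "comp_step D R E Solve A A' \<Longrightarrow> (\<exists>h. simmap D A A' h) \<and> (closed A \<longrightarrow> closed A')"
proof -
  assume "comp_step D R E Solve A A'"
  then obtain A0 A1 A2 where a: "eval_auto D A A0" "cstep D R Solve A0 A1" "merge_nf D E A1 A2" "eval_auto D A2 A'"
    unfolding comp_step_def by blast
  have s1: "simmap D A A0 id" using a(1) by (intro simmap_id) (auto simp: eval_auto_def)
  have s2: "simmap D A0 A1 id" using a(2) cstep_trans cstep_finals by (metis simmap_id)
  obtain h where s3: "simmap D A1 A2 h" and c3: "closed A1 \<longrightarrow> closed A2"
    using merge_star_sim a(3) unfolding merge_nf_def by blast
  have s4: "simmap D A2 A' id" using a(4) by (intro simmap_id) (auto simp: eval_auto_def)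
  show ?thesis using simmap_comp[OF simmap_comp[OF simmap_comp[OF s1 s2] s3] s4]
      eval_auto_closed a(1,4) cstep_closed[OF a(2)] c3 by blast
qed

lemma lang_sim:
  assumes vd: "valid_dom D" and sm: "simmap D A A' h"
  shows "lang_A D A \<subseteq> lang_A D A'"
proof
  fix s assume "s \<in> lang_A D A"
  then obtain qf b where s: "qf \<in> finals A" "ground s" "tle D (absT D (\<lambda>_. undefined) s) b" "run D A b qf"
    unfolding lang_A_def lang_def by blast
  have "ground b" using ap_ground tle_ap[OF vd s(2,3)] by blast
  then have "run D A' b (h qf)" using sm s(4) unfolding simmap_def by blast
  moreover have "h qf \<in> finals A'" using sm s(1) unfolding simmap_def by blast
  ultimately show "s \<in> lang_A D A'" unfolding lang_A_def lang_def using s by blast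
qed



theorem mainTheorem6:
  fixes D :: "('d,'o,'l::complete_lattice) absdom"
    and R :: "('f,'o,'d,'v) crule set"
    and E :: "('f,'o,'d,'v) ceqn set"
    and Solve :: "('f,'o,'d,'l,'q,'v) solver"
    and A Astar :: "('f,'o,'l,'q) lta"
  assumes "valid_dom D"
    and "ctrs R" and "left_linear R"
    and "linear_eqs E"
    and "wf_lta A"
    and "sound_solver D Solve"
    and "completion_terminates D R E Solve A Astar"
  shows "rstar D R (lang_A D A :: ('f,'o,'d,'v) trm set) \<subseteq> lang_A D Astar"
proof -
  note vd = assms(1) and ct = assms(2) and ll = assms(3) and ss = assms(6)
  obtain seq k where sq: "seq 0 = A" "\<forall>i\<le>k. comp_step D R E Solve (seq i) (seq (Suc i))"
    "seq (Suc k) = seq k" "Astar = seq k"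
    using assms(7) unfolding completion_terminates_def by blast
  have clA: "closed A" using assms(5) unfolding wf_lta_def closed_def by blast
  have inv: "closed (seq i) \<and> (lang_A D A :: ('f,'o,'d,'v) trm set) \<subseteq> lang_A D (seq i)" if "i \<le> k" for i
    using that
  proof (induction i)
    case 0 then show ?case using sq(1) clA by simp
  next
    case (Suc i)
    have ih: "closed (seq i) \<and> (lang_A D A :: ('f,'o,'d,'v) trm set) \<subseteq> lang_A D (seq i)" using Suc.IH[OF Suc_leD[OF Suc.prems]] .
    have "comp_step D R E Solve (seq i) (seq (Suc i))" using sq(2) Suc.prems by simp
    from comp_step_sim[OF this] obtain h where h: "simmap D (seq i) (seq (Suc i)) h"
      and c: "closed (seq i) \<longrightarrow> closed (seq (Suc i))" by blast
    have "(lang_A D (seq i) :: ('f,'o,'d,'v) trm set) \<subseteq> lang_A D (seq (Suc i))" by (rule lang_sim[OF vd h])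
    then show ?case using ih c by blast
  qed
  have clS: "closed Astar" and l0: "(lang_A D A :: ('f,'o,'d,'v) trm set) \<subseteq> lang_A D Astar" using inv[of k] sq(4) by auto
  have "comp_step D R E Solve Astar Astar" using sq by auto
  then obtain A0 A1 A2 where a: "eval_auto D Astar A0" "cstep D R Solve A0 A1" "merge_nf D E A1 A2" "eval_auto D A2 Astar"
    unfolding comp_step_def by blast
  have tS0: "trans Astar \<subseteq> trans A0" "finals A0 = finals Astar" using a(1) unfolding eval_auto_def by auto
  have cl0: "closed A0" using eval_auto_closed a(1) clS by blast
  have t01: "trans A0 \<subseteq> trans A1" "finals A1 = finals A0" using cstep_trans cstep_finals a(2) by blast+
  obtain h where h: "simmap D A1 A2 h" using merge_star_sim a(3) unfolding merge_nf_def by blast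
  have t2S: "trans A2 \<subseteq> trans Astar" "finals Astar = finals A2" using a(4) unfolding eval_auto_def by auto
  have closure: "t \<in> lang_A D Astar" if s: "s \<in> lang_A D Astar" and st: "rstep D R s t"
    for s t :: "('f,'o,'d,'v) trm"
  proof -
    obtain qf b where sb: "qf \<in> finals Astar" "ground s" "tle D (absT D (\<lambda>_. undefined) s) b" "run D Astar b qf"
      using s unfolding lang_A_def lang_def by blast
    have aps: "ap D s b" using tle_ap[OF vd sb(2,3)] .
    have rb0: "run D A0 b qf" using run_mono[OF sb(4) tS0(1)] .
    obtain l r cs \<sigma> s' where rs: "(l,r,cs) \<in> R" "\<forall>x. ground (\<sigma> x)" "conds_hold D \<sigma> cs"
      "ctx_rep (subst \<sigma> l) (subst \<sigma> r) s s'" "t = ceval D s'"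
      using st unfolding rstep_def by blast
    have lnv: "\<forall>x. l \<noteq> V x" "passive_trm l" using ct rs(1) unfolding ctrs_def by fastforce+
    have niu: "\<not> interp (subst \<sigma> l)" using lnv by (cases l) auto
    have H: "\<And>bu q. ap D (subst \<sigma> l) bu \<Longrightarrow> run D A0 bu q \<Longrightarrow> \<exists>bv. ap D (subst \<sigma> r) bv \<and> run D A1 bv q"
      by (rule root_lemma[OF vd ss ct ll cl0 a(2) rs(1,2,3)])
    have "\<exists>b'. ap D s' b' \<and> run D A1 b' qf"
    proof (rule ctx_lemma[OF rs(4) niu t01(1)])
      show "\<And>bu q. ap D (subst \<sigma> l) bu \<Longrightarrow> run D A0 bu q \<Longrightarrow> \<exists>bv. ap D (subst \<sigma> r) bv \<and> run D A1 bv q"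
        by (rule H)
      show "ap D s b" by (rule aps)
      show "run D A0 b qf" by (rule rb0)
    qed
    then obtain b' where b': "ap D s' b'" "run D A1 b' qf" by blast
    have gb': "ground b'" "ground s'" using ap_ground b'(1) by auto
    have "run D A2 b' (h qf)" using h gb' b'(2) unfolding simmap_def by blast
    then have r2: "run D Astar b' (h qf)" using run_mono[OF _ t2S(1)] by blast
    have fh: "h qf \<in> finals Astar" using h sb(1) tS0(2) t01(2) t2S(2) unfolding simmap_def by auto
    have "tle D (absT D (\<lambda>_. undefined) t) b'" using ap_tle[OF vd b'(1)] rs(5) by blast
    moreover have "ground t" using gb'(2) vars_ceval[of D s'] rs(5) unfolding ground_def by auto
    ultimately show ?thesis using r2 fh unfolding lang_A_def lang_def by blast
  qed
  show ?thesis
  proof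
    fix t assume "t \<in> rstar D R (lang_A D A :: ('f,'o,'d,'v) trm set)"
    then obtain s where s: "s \<in> lang_A D A" "(rstep D R)\<^sup>*\<^sup>* s t" unfolding rstar_def by blast
    from s(2) show "t \<in> lang_A D Astar"
    proof (induction rule: rtranclp_induct)
      case base then show ?case using s(1) l0 by blast
    next
      case (step y z) then show ?case using closure by blast
    qed
  qed
qed

end
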